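(* Let $A$ be an arborally satisfied set that is doubly congruent with a BST $T$. Then for any top tree $\tau$ of $T$, if the keys of $\tau$ are accessed (i.e. a point $(c,k)$ is added for each key $k$ of $\tau$) along a single column $c$, where $c$ is either the leftmost column of $A$, the rightmost column of $A$, the column immediately to the left of the leftmost column of $A$, or the column immediately to the right of the rightmost column of $A$, then the resulting set of points is arborally satisfied.
   Context: Point sets live in the grid plane, with the horizontal axis being time (columns) and the vertical axis being key (rows). A set $P$ of points is arborally satisfied if for every two points $x,y\in P$ not on a common horizontal or vertical line, the closed axis-parallel rectangle with corners $x$ and $y$ contains at least one point of $P$ other than $x,y$. A treap over pairs (key, priority) is a BST on keys that is a heap on priorities (higher priority nearer the root); ties in priority are grouped into multi-nodes, giving a multi-treap, in which each multi-node holds keys of equal priority and has children consistent with an underlying BST order (a multi-node may have up to one more child than its number of keys). For an arborally satisfied set $A$ whose rows are the keys of $T$, the left (right) priority of a row is the distance from the left (right) boundary of $A$ to the first point of $A$ in that row, smaller distance meaning higher priority. The left (right) multi-treap of $A$ is the multi-treap on these (row, priority) pairs. $T$ is left (right) congruent with $A$ if there is a choice of binary search tree structure inside each multi-node of the left (right) multi-treap of $A$ making the resulting tree equal to $T$; $T$ is doubly congruent with $A$ if it is both left and right congruent. A top tree of $T$ is a connected set of nodes containing the root. *)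

theory Defs
  imports Main "HOL-Library.Tree"
begin

(* Points of the grid plane: (time, key) = (column, row). *)
type_synonym point = "int \<times> int"

definition arborally_satisfied :: "point set \<Rightarrow> bool" where
  "arborally_satisfied P \<longleftrightarrow>
     (\<forall>x\<in>P. \<forall>y\<in>P. fst x \<noteq> fst y \<and> snd x \<noteq> snd y \<longrightarrow>
        (\<exists>z\<in>P. z \<noteq> x \<and> z \<noteq> y \<and>
           min (fst x) (fst y) \<le> fst z \<and> fst z \<le> max (fst x) (fst y) \<and>
           min (snd x) (snd y) \<le> snd z \<and> snd z \<le> max (snd x) (snd y)))"

definition leftmost_col :: "point set \<Rightarrow> int" where
  "leftmost_col A = Min (fst ` A)"

definition rightmost_col :: "point set \<Rightarrow> int" where
  "rightmost_col A = Max (fst ` A)"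

definition rows :: "point set \<Rightarrow> int set" where
  "rows A = snd ` A"

(* Left (right) priority of row k: distance from the left (right) boundary of A
   to the first point of A in row k; SMALLER value = HIGHER priority. *)
definition left_prio :: "point set \<Rightarrow> int \<Rightarrow> int" where
  "left_prio A k = Min {t. (t, k) \<in> A} - leftmost_col A"

definition right_prio :: "point set \<Rightarrow> int \<Rightarrow> int" where
  "right_prio A k = rightmost_col A - Max {t. (t, k) \<in> A}"

(* Multi-trees: a multi-node holds a sorted list of keys and a list of
   (length keys + 1) children; MLeaf is the empty (multi-)tree. *)
datatype 'a mtree = MLeaf | MNode "'a list" "'a mtree list"

definition gap :: "'a::linorder list \<Rightarrow> nat \<Rightarrow> 'a set" where
  "gap ks i = {k. (i = 0 \<or> ks ! (i - 1) < k) \<and> (i = length ks \<or> k < ks ! i)}"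

(* M is the multi-treap of the key set K with priority function prio
   (smaller prio value = higher priority; ties grouped into one multi-node). *)
inductive is_multi_treap :: "('a::linorder \<Rightarrow> int) \<Rightarrow> 'a set \<Rightarrow> 'a mtree \<Rightarrow> bool"
  for prio where
  mt_empty: "is_multi_treap prio {} MLeaf"
| mt_node: "\<lbrakk> finite K; K \<noteq> {};
             ks = sorted_list_of_set {k \<in> K. prio k = Min (prio ` K)};
             length cs = length ks + 1;
             \<forall>i < length cs. is_multi_treap prio (K \<inter> gap ks i) (cs ! i) \<rbrakk>
           \<Longrightarrow> is_multi_treap prio K (MNode ks cs)"

(* replace the leaves of a binary tree, from left to right, by the given trees *)
fun graft :: "'a tree \<Rightarrow> 'a tree list \<Rightarrow> 'a tree" where
  "graft Leaf ts = hd ts"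
| "graft (Node l x r) ts =
     Node (graft l (take (size1 l) ts)) x (graft r (drop (size1 l) ts))"

(* T results from M by choosing a binary search tree structure inside each multi-node *)
inductive refines :: "'a::linorder mtree \<Rightarrow> 'a tree \<Rightarrow> bool" where
  ref_leaf: "refines MLeaf Leaf"
| ref_node: "\<lbrakk> bst S; inorder S = ks; list_all2 refines cs ts \<rbrakk>
             \<Longrightarrow> refines (MNode ks cs) (graft S ts)"

definition left_multi_treap_of :: "point set \<Rightarrow> int mtree \<Rightarrow> bool" where
  "left_multi_treap_of A M \<longleftrightarrow> is_multi_treap (left_prio A) (rows A) M"

definition right_multi_treap_of :: "point set \<Rightarrow> int mtree \<Rightarrow> bool" where
  "right_multi_treap_of A M \<longleftrightarrow> is_multi_treap (right_prio A) (rows A) M"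

definition left_congruent :: "int tree \<Rightarrow> point set \<Rightarrow> bool" where
  "left_congruent T A \<longleftrightarrow> (\<exists>M. left_multi_treap_of A M \<and> refines M T)"

definition right_congruent :: "int tree \<Rightarrow> point set \<Rightarrow> bool" where
  "right_congruent T A \<longleftrightarrow> (\<exists>M. right_multi_treap_of A M \<and> refines M T)"

definition doubly_congruent :: "int tree \<Rightarrow> point set \<Rightarrow> bool" where
  "doubly_congruent T A \<longleftrightarrow> left_congruent T A \<and> right_congruent T A"

(* \<tau> is obtained from T by cutting off subtrees, i.e. its node set is connected and
   closed under taking parents *)
inductive pruned :: "'a tree \<Rightarrow> 'a tree \<Rightarrow> bool" where
  pr_cut: "pruned t Leaf"
| pr_node: "\<lbrakk> pruned l l'; pruned r r' \<rbrakk> \<Longrightarrow> pruned (Node l x r) (Node l' x r')"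

(* top tree: connected set of nodes containing the root *)
definition top_tree :: "'a tree \<Rightarrow> 'a tree \<Rightarrow> bool" where
  "top_tree \<tau> T \<longleftrightarrow> pruned T \<tau> \<and> \<tau> \<noteq> Leaf"

end

theory Submission
  imports Defs
begin

fun heapw :: "('a \<Rightarrow> int) \<Rightarrow> 'a tree \<Rightarrow> bool" where
  "heapw p Leaf = True"
| "heapw p (Node l x r) = ((\<forall>d\<in>set_tree l \<union> set_tree r. p x \<le> p d) \<and> heapw p l \<and> heapw p r)"

lemma graft_set:
  "length ts = size1 S \<Longrightarrow> set_tree (graft S ts) \<subseteq> set_tree S \<union> (\<Union>t\<in>set ts. set_tree t)"
proof (induction S arbitrary: ts)
  case Leaf
  then obtain t where "ts = [t]" by (cases ts) auto
  then show ?case by simp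
next
  case (Node l x r)
  have 1: "set_tree (graft l (take (size1 l) ts)) \<subseteq> set_tree l \<union> (\<Union>t\<in>set ts. set_tree t)"
    using Node.IH(1)[of "take (size1 l) ts"] Node.prems set_take_subset[of "size1 l" ts] by auto
  have 2: "set_tree (graft r (drop (size1 l) ts)) \<subseteq> set_tree r \<union> (\<Union>t\<in>set ts. set_tree t)"
    using Node.IH(2)[of "drop (size1 l) ts"] Node.prems set_drop_subset[of "size1 l" ts] by auto
  show ?case using 1 2 by auto
qed

lemma graft_heap:
  "length ts = size1 S \<Longrightarrow> \<forall>t\<in>set ts. heapw p t \<Longrightarrow>
   \<forall>x\<in>set_tree S. \<forall>d\<in>set_tree S \<union> (\<Union>t\<in>set ts. set_tree t). p x \<le> p d \<Longrightarrow>
   heapw p (graft S ts)"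
proof (induction S arbitrary: ts)
  case Leaf
  then obtain t where "ts = [t]" by (cases ts) auto
  then show ?case using Leaf by simp
next
  case (Node l x r)
  let ?a = "take (size1 l) ts" and ?b = "drop (size1 l) ts"
  have la: "length ?a = size1 l" and lb: "length ?b = size1 r" using Node.prems(1) by auto
  have sa: "set ?a \<subseteq> set ts" and sb: "set ?b \<subseteq> set ts" by (auto dest: in_set_takeD in_set_dropD)
  have h1: "heapw p (graft l ?a)"
  proof (rule Node.IH(1)[OF la])
    show "\<forall>t\<in>set ?a. heapw p t" using Node.prems(2) sa by blast
    show "\<forall>x\<in>set_tree l. \<forall>d\<in>set_tree l \<union> (\<Union>t\<in>set ?a. set_tree t). p x \<le> p d"
    proof (intro ballI)
      fix y d assume y: "y \<in> set_tree l" and d: "d \<in> set_tree l \<union> (\<Union>t\<in>set ?a. set_tree t)"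
      have "y \<in> set_tree (Node l x r)" using y by simp
      moreover have "d \<in> set_tree (Node l x r) \<union> (\<Union>t\<in>set ts. set_tree t)" using d sa by auto
      ultimately show "p y \<le> p d" using Node.prems(3) by blast
    qed
  qed
  have h2: "heapw p (graft r ?b)"
  proof (rule Node.IH(2)[OF lb])
    show "\<forall>t\<in>set ?b. heapw p t" using Node.prems(2) sb by blast
    show "\<forall>x\<in>set_tree r. \<forall>d\<in>set_tree r \<union> (\<Union>t\<in>set ?b. set_tree t). p x \<le> p d"
    proof (intro ballI)
      fix y d assume y: "y \<in> set_tree r" and d: "d \<in> set_tree r \<union> (\<Union>t\<in>set ?b. set_tree t)"
      have "y \<in> set_tree (Node l x r)" using y by simp
      moreover have "d \<in> set_tree (Node l x r) \<union> (\<Union>t\<in>set ts. set_tree t)" using d sb by auto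
      ultimately show "p y \<le> p d" using Node.prems(3) by blast
    qed
  qed
  have s1: "set_tree (graft l ?a) \<subseteq> set_tree l \<union> (\<Union>t\<in>set ts. set_tree t)"
    using graft_set[OF la] sa by auto
  have s2: "set_tree (graft r ?b) \<subseteq> set_tree r \<union> (\<Union>t\<in>set ts. set_tree t)"
    using graft_set[OF lb] sb by auto
  have "\<forall>d\<in>set_tree (graft l ?a) \<union> set_tree (graft r ?b). p x \<le> p d"
  proof
    fix d assume "d \<in> set_tree (graft l ?a) \<union> set_tree (graft r ?b)"
    then have "d \<in> set_tree (Node l x r) \<union> (\<Union>t\<in>set ts. set_tree t)" using s1 s2 by auto
    then show "p x \<le> p d" using Node.prems(3) by auto
  qed
  then show ?case using h1 h2 by simp
qed

lemma refines_heap: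
  "refines M T \<Longrightarrow> is_multi_treap p K M \<Longrightarrow> heapw p T \<and> set_tree T \<subseteq> K"
proof (induction arbitrary: K rule: refines.induct)
  case ref_leaf
  then show ?case by simp
next
  case (ref_node S ks cs ts)
  have C: "finite K \<and> K \<noteq> {} \<and> ks = sorted_list_of_set {k \<in> K. p k = Min (p ` K)} \<and>
    length cs = length ks + 1 \<and> (\<forall>i < length cs. is_multi_treap p (K \<inter> gap ks i) (cs ! i))"
    using ref_node.prems by (cases rule: is_multi_treap.cases) simp_all
  then have fK: "finite K" and nK: "K \<noteq> {}"
    and ks: "ks = sorted_list_of_set {k \<in> K. p k = Min (p ` K)}"
    and lc: "length cs = length ks + 1"
    and ch: "\<forall>i < length cs. is_multi_treap p (K \<inter> gap ks i) (cs ! i)" by blast+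
  have lts: "length ts = length cs" using list_all2_lengthD[OF ref_node.IH] by simp
  have len: "length ts = size1 S"
    using lts lc ref_node.hyps(2) by (metis length_inorder size1_size)
  have sub: "\<forall>t\<in>set ts. heapw p t \<and> set_tree t \<subseteq> K"
  proof
    fix t assume "t \<in> set ts"
    then obtain i where i: "i < length ts" "t = ts ! i" by (auto simp: in_set_conv_nth)
    have "refines (cs ! i) (ts ! i) \<and> (\<forall>K. is_multi_treap p K (cs ! i) \<longrightarrow> heapw p (ts ! i) \<and> set_tree (ts ! i) \<subseteq> K)"
      using ref_node.IH i(1) lts by (auto simp: list_all2_conv_all_nth)
    moreover have "is_multi_treap p (K \<inter> gap ks i) (cs ! i)" using ch i lts by simp
    ultimately have "heapw p (ts ! i) \<and> set_tree (ts ! i) \<subseteq> K \<inter> gap ks i" by blast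
    then show "heapw p t \<and> set_tree t \<subseteq> K" using i by auto
  qed
  have setS: "set_tree S = {k \<in> K. p k = Min (p ` K)}"
    using ref_node.hyps(2) ks fK by (metis (no_types, lifting) finite_subset mem_Collect_eq
        set_inorder set_sorted_list_of_set subsetI)
  have sS: "set_tree S \<subseteq> K" using setS by auto
  have all: "set_tree S \<union> (\<Union>t\<in>set ts. set_tree t) \<subseteq> K" using sS sub by auto
  have "\<forall>x\<in>set_tree S. \<forall>d\<in>set_tree S \<union> (\<Union>t\<in>set ts. set_tree t). p x \<le> p d"
  proof (intro ballI)
    fix x d assume x: "x \<in> set_tree S" and d: "d \<in> set_tree S \<union> (\<Union>t\<in>set ts. set_tree t)"
    have "p x = Min (p ` K)" using x setS by auto
    also have "\<dots> \<le> p d" using d all fK by auto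
    finally show "p x \<le> p d" .
  qed
  then have "heapw p (graft S ts)" using graft_heap[OF len] sub by auto
  moreover have "set_tree (graft S ts) \<subseteq> K" using graft_set[OF len] all by auto
  ultimately show ?case by simp
qed

lemma pruned_subset: "pruned t t' \<Longrightarrow> set_tree t' \<subseteq> set_tree t"
  by (induction rule: pruned.induct) auto

lemma pruned_Q:
  fixes p :: "int \<Rightarrow> int"
  assumes "pruned T \<tau>" "bst T" "heapw p T"
  shows "\<forall>k\<in>set_tree \<tau>. \<forall>j\<in>set_tree T. j \<noteq> k \<longrightarrow>
     (\<exists>m\<in>set_tree \<tau>. m \<noteq> k \<and> min k j \<le> m \<and> m \<le> max k j) \<or> p k \<le> p j"
  using assms
proof (induction rule: pruned.induct)
  case (pr_cut t)
  then show ?case by simp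
next
  case (pr_node l l' r r' x)
  have bl: "bst l" "bst r" and ol: "\<forall>y\<in>set_tree l. y < x" and or: "\<forall>y\<in>set_tree r. x < y"
    using pr_node.prems by auto
  have hl: "heapw p l" "heapw p r" and hx: "\<forall>d\<in>set_tree l \<union> set_tree r. p x \<le> p d"
    using pr_node.prems by auto
  have sl: "set_tree l' \<subseteq> set_tree l" "set_tree r' \<subseteq> set_tree r"
    using pruned_subset pr_node.hyps by auto
  show ?case
  proof (intro ballI impI)
    fix k j assume k: "k \<in> set_tree (Node l' x r')" and j: "j \<in> set_tree (Node l x r)" and jk: "j \<noteq> k"
    let ?G = "(\<exists>m\<in>set_tree (Node l' x r'). m \<noteq> k \<and> min k j \<le> m \<and> m \<le> max k j) \<or> p k \<le> p j"
    have xin: "x \<in> set_tree (Node l' x r')" by simp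
    show ?G
    proof (cases "k = x")
      case True
      then show ?thesis using j jk hx by auto
    next
      case False
      then have "k \<in> set_tree l' \<or> k \<in> set_tree r'" using k by auto
      then show ?thesis
      proof
        assume kl: "k \<in> set_tree l'"
        then have kx: "k < x" using sl ol by auto
        show ?thesis
        proof (cases "j \<in> set_tree l")
          case True
          then have "(\<exists>m\<in>set_tree l'. m \<noteq> k \<and> min k j \<le> m \<and> m \<le> max k j) \<or> p k \<le> p j"
            using pr_node.IH(1) bl hl kl jk by blast
          then show ?thesis by auto
        next
          case False
          then have "x \<le> j" using j or by auto
          then show ?thesis using xin kx by (intro disjI1 bexI[of _ x]) auto
        qed
      next
        assume kr: "k \<in> set_tree r'"
        then have kx: "x < k" using sl or by auto
        show ?thesis
        proof (cases "j \<in> set_tree r")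
          case True
          then have "(\<exists>m\<in>set_tree r'. m \<noteq> k \<and> min k j \<le> m \<and> m \<le> max k j) \<or> p k \<le> p j"
            using pr_node.IH(2) bl hl kr jk by blast
          then show ?thesis by auto
        next
          case False
          then have "j \<le> x" using j ol by auto
          then show ?thesis using xin kx by (intro disjI1 bexI[of _ x]) auto
        qed
      qed
    qed
  qed
qed


definition inrect :: "point \<Rightarrow> point \<Rightarrow> point \<Rightarrow> bool" where
  "inrect x y z \<longleftrightarrow> min (fst x) (fst y) \<le> fst z \<and> fst z \<le> max (fst x) (fst y) \<and>
           min (snd x) (snd y) \<le> snd z \<and> snd z \<le> max (snd x) (snd y)"

lemma inrect_sym: "inrect x y z = inrect y x z"
  unfolding inrect_def by (simp add: min.commute max.commute)

lemma AS_alt: "arborally_satisfied P \<longleftrightarrow>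
  (\<forall>x\<in>P. \<forall>y\<in>P. fst x \<noteq> fst y \<and> snd x \<noteq> snd y \<longrightarrow> (\<exists>z\<in>P. z \<noteq> x \<and> z \<noteq> y \<and> inrect x y z))"
  unfolding arborally_satisfied_def inrect_def by simp

lemma core_gen:
  assumes AS: "arborally_satisfied A"
    and H: "\<And>k y. k \<in> S \<Longrightarrow> (c, k) \<notin> A \<Longrightarrow> y \<in> A \<Longrightarrow> fst y \<noteq> c \<Longrightarrow> snd y \<noteq> k \<Longrightarrow>
       \<exists>z\<in>A \<union> {(c, k) | k. k \<in> S}. z \<noteq> (c,k) \<and> z \<noteq> y \<and> inrect (c,k) y z"
  shows "arborally_satisfied (A \<union> {(c, k) | k. k \<in> S})"
  unfolding AS_alt
proof (intro ballI impI)
  let ?B = "A \<union> {(c, k) | k. k \<in> S}"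
  fix x y assume x: "x \<in> ?B" and y: "y \<in> ?B" and ne: "fst x \<noteq> fst y \<and> snd x \<noteq> snd y"
  show "\<exists>z\<in>?B. z \<noteq> x \<and> z \<noteq> y \<and> inrect x y z"
  proof (cases "x \<in> A \<and> y \<in> A")
    case True
    then obtain z where "z \<in> A" "z \<noteq> x \<and> z \<noteq> y \<and> inrect x y z"
      using AS ne unfolding AS_alt by blast
    then show ?thesis by blast
  next
    case False
    show ?thesis
    proof (cases "x \<in> A")
      case True
      then have "y \<notin> A" using False by blast
      then obtain k where k: "y = (c,k)" "k \<in> S" using y by blast
      obtain z where "z \<in> ?B" "z \<noteq> (c,k) \<and> z \<noteq> x \<and> inrect (c,k) x z"
        using H[OF k(2) _ True] k ne \<open>y \<notin> A\<close> by auto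
      then show ?thesis using k inrect_sym by blast
    next
      case xA: False
      then obtain k where k: "x = (c,k)" "k \<in> S" using x by blast
      have yA: "y \<in> A" using y k ne by auto
      obtain z where "z \<in> ?B" "z \<noteq> (c,k) \<and> z \<noteq> y \<and> inrect (c,k) y z"
        using H[OF k(2) _ yA] k ne xA by auto
      then show ?thesis using k by blast
    qed
  qed
qed

lemma core_left:
  assumes AS: "arborally_satisfied A" and cA: "\<forall>q\<in>A. c \<le> fst q"
    and P: "\<forall>k\<in>S. \<forall>j t. (t,j) \<in> A \<longrightarrow> j \<noteq> k \<longrightarrow>
       (\<exists>m\<in>S. m \<noteq> k \<and> min k j \<le> m \<and> m \<le> max k j) \<or> (\<exists>t'. (t',k) \<in> A \<and> t' \<le> t)"
  shows "arborally_satisfied (A \<union> {(c, k) | k. k \<in> S})"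
proof (rule core_gen[OF AS])
  fix k y assume k: "k \<in> S" and nA: "(c, k) \<notin> A" and y: "y \<in> A" and yc: "fst y \<noteq> c" and yk: "snd y \<noteq> k"
  obtain t j where tj: "y = (t,j)" by (cases y)
  have ct: "c < t" using cA y yc tj by force
  from P k y tj yk
  have "(\<exists>m\<in>S. m \<noteq> k \<and> min k j \<le> m \<and> m \<le> max k j) \<or> (\<exists>t'. (t',k) \<in> A \<and> t' \<le> t)" by auto
  then show "\<exists>z\<in>A \<union> {(c, k) | k. k \<in> S}. z \<noteq> (c,k) \<and> z \<noteq> y \<and> inrect (c,k) y z"
  proof
    assume "\<exists>m\<in>S. m \<noteq> k \<and> min k j \<le> m \<and> m \<le> max k j"
    then obtain m where m: "m \<in> S" "m \<noteq> k" "min k j \<le> m" "m \<le> max k j" by blast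
    show ?thesis
      using m ct tj by (intro bexI[of _ "(c,m)"]) (auto simp: inrect_def)
  next
    assume "\<exists>t'. (t',k) \<in> A \<and> t' \<le> t"
    then obtain t' where t': "(t',k) \<in> A" "t' \<le> t" by blast
    have "c \<le> t'" using cA t' by force
    then show ?thesis
      using t' ct tj nA yk by (intro bexI[of _ "(t',k)"]) (auto simp: inrect_def)
  qed
qed

lemma core_right:
  assumes AS: "arborally_satisfied A" and cA: "\<forall>q\<in>A. fst q \<le> c"
    and P: "\<forall>k\<in>S. \<forall>j t. (t,j) \<in> A \<longrightarrow> j \<noteq> k \<longrightarrow>
       (\<exists>m\<in>S. m \<noteq> k \<and> min k j \<le> m \<and> m \<le> max k j) \<or> (\<exists>t'. (t',k) \<in> A \<and> t \<le> t')"
  shows "arborally_satisfied (A \<union> {(c, k) | k. k \<in> S})"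
proof (rule core_gen[OF AS])
  fix k y assume k: "k \<in> S" and nA: "(c, k) \<notin> A" and y: "y \<in> A" and yc: "fst y \<noteq> c" and yk: "snd y \<noteq> k"
  obtain t j where tj: "y = (t,j)" by (cases y)
  have ct: "t < c" using cA y yc tj by force
  from P k y tj yk
  have "(\<exists>m\<in>S. m \<noteq> k \<and> min k j \<le> m \<and> m \<le> max k j) \<or> (\<exists>t'. (t',k) \<in> A \<and> t \<le> t')" by auto
  then show "\<exists>z\<in>A \<union> {(c, k) | k. k \<in> S}. z \<noteq> (c,k) \<and> z \<noteq> y \<and> inrect (c,k) y z"
  proof
    assume "\<exists>m\<in>S. m \<noteq> k \<and> min k j \<le> m \<and> m \<le> max k j"
    then obtain m where m: "m \<in> S" "m \<noteq> k" "min k j \<le> m" "m \<le> max k j" by blast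
    show ?thesis
      using m ct tj by (intro bexI[of _ "(c,m)"]) (auto simp: inrect_def)
  next
    assume "\<exists>t'. (t',k) \<in> A \<and> t \<le> t'"
    then obtain t' where t': "(t',k) \<in> A" "t \<le> t'" by blast
    have "t' \<le> c" using cA t' by force
    then show ?thesis
      using t' ct tj nA yk by (intro bexI[of _ "(t',k)"]) (auto simp: inrect_def)
  qed
qed


lemma pruned_Leaf: "pruned Leaf t \<Longrightarrow> t = Leaf"
  by (cases rule: pruned.cases) auto

theorem mainTheorem5:
  fixes A :: "point set" and T :: "int tree" and \<tau> :: "int tree" and c :: int
  assumes "finite A"
    and "arborally_satisfied A"
    and "bst T"
    and "set_tree T = rows A"
    and "doubly_congruent T A"
    and "top_tree \<tau> T"
    and "c \<in> {leftmost_col A, rightmost_col A, leftmost_col A - 1, rightmost_col A + 1}"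
  shows "arborally_satisfied (A \<union> {(c, k) | k. k \<in> set_tree \<tau>})"
proof -
  have pr: "pruned T \<tau>" and tnl: "\<tau> \<noteq> Leaf" using assms(6) unfolding top_tree_def by auto
  have "T \<noteq> Leaf" using pr tnl pruned_Leaf by blast
  then have "A \<noteq> {}" using assms(4) unfolding rows_def by (cases T) auto
  have fin: "finite {t. (t, k) \<in> A}" for k
  proof (rule finite_subset[of _ "fst ` A"])
    show "{t. (t, k) \<in> A} \<subseteq> fst ` A" by force
    show "finite (fst ` A)" using assms(1) by simp
  qed
  have ne: "{t. (t, k) \<in> A} \<noteq> {}" if "k \<in> rows A" for k
    using that unfolding rows_def by force
  have Ssub: "set_tree \<tau> \<subseteq> rows A" using pruned_subset[OF pr] assms(4) by simp
  have jrows: "j \<in> set_tree T" if "(t, j) \<in> A" for t j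
    using that assms(4) unfolding rows_def by force
  have "c \<le> leftmost_col A \<or> rightmost_col A \<le> c" using assms(7) by auto
  then show ?thesis
  proof
    assume cL: "c \<le> leftmost_col A"
    obtain M where M: "is_multi_treap (left_prio A) (rows A) M" "refines M T"
      using assms(5) unfolding doubly_congruent_def left_congruent_def left_multi_treap_of_def by blast
    have hp: "heapw (left_prio A) T" using refines_heap[OF M(2) M(1)] by simp
    note Q = pruned_Q[OF pr assms(3) hp]
    show ?thesis
    proof (rule core_left[OF assms(2)])
      show "\<forall>q\<in>A. c \<le> fst q"
      proof
        fix q assume "q \<in> A"
        then have "Min (fst ` A) \<le> fst q" using assms(1) by (intro Min_le) auto
        then show "c \<le> fst q" using cL unfolding leftmost_col_def by linarith
      qed
      show "\<forall>k\<in>set_tree \<tau>. \<forall>j t. (t,j) \<in> A \<longrightarrow> j \<noteq> k \<longrightarrow>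
       (\<exists>m\<in>set_tree \<tau>. m \<noteq> k \<and> min k j \<le> m \<and> m \<le> max k j) \<or> (\<exists>t'. (t',k) \<in> A \<and> t' \<le> t)"
      proof (intro ballI allI impI)
        fix k j t assume k: "k \<in> set_tree \<tau>" and tj: "(t,j) \<in> A" and jk: "j \<noteq> k"
        have "(\<exists>m\<in>set_tree \<tau>. m \<noteq> k \<and> min k j \<le> m \<and> m \<le> max k j) \<or> left_prio A k \<le> left_prio A j"
          using Q k jrows[OF tj] jk by blast
        moreover have "\<exists>t'. (t',k) \<in> A \<and> t' \<le> t" if "left_prio A k \<le> left_prio A j"
        proof (intro exI conjI)
          show "(Min {t. (t, k) \<in> A}, k) \<in> A" using Min_in[OF fin ne] k Ssub by blast
          have "Min {t. (t, k) \<in> A} \<le> Min {t. (t, j) \<in> A}" using that unfolding left_prio_def by simp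
          also have "\<dots> \<le> t" using Min_le[OF fin] tj by blast
          finally show "Min {t. (t, k) \<in> A} \<le> t" .
        qed
        ultimately show "(\<exists>m\<in>set_tree \<tau>. m \<noteq> k \<and> min k j \<le> m \<and> m \<le> max k j) \<or> (\<exists>t'. (t',k) \<in> A \<and> t' \<le> t)"
          by blast
      qed
    qed
  next
    assume cR: "rightmost_col A \<le> c"
    obtain M where M: "is_multi_treap (right_prio A) (rows A) M" "refines M T"
      using assms(5) unfolding doubly_congruent_def right_congruent_def right_multi_treap_of_def by blast
    have hp: "heapw (right_prio A) T" using refines_heap[OF M(2) M(1)] by simp
    note Q = pruned_Q[OF pr assms(3) hp]
    show ?thesis
    proof (rule core_right[OF assms(2)])
      show "\<forall>q\<in>A. fst q \<le> c"
      proof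
        fix q assume "q \<in> A"
        then have "fst q \<le> Max (fst ` A)" using assms(1) by (intro Max_ge) auto
        then show "fst q \<le> c" using cR unfolding rightmost_col_def by linarith
      qed
      show "\<forall>k\<in>set_tree \<tau>. \<forall>j t. (t,j) \<in> A \<longrightarrow> j \<noteq> k \<longrightarrow>
       (\<exists>m\<in>set_tree \<tau>. m \<noteq> k \<and> min k j \<le> m \<and> m \<le> max k j) \<or> (\<exists>t'. (t',k) \<in> A \<and> t \<le> t')"
      proof (intro ballI allI impI)
        fix k j t assume k: "k \<in> set_tree \<tau>" and tj: "(t,j) \<in> A" and jk: "j \<noteq> k"
        have "(\<exists>m\<in>set_tree \<tau>. m \<noteq> k \<and> min k j \<le> m \<and> m \<le> max k j) \<or> right_prio A k \<le> right_prio A j"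
          using Q k jrows[OF tj] jk by blast
        moreover have "\<exists>t'. (t',k) \<in> A \<and> t \<le> t'" if "right_prio A k \<le> right_prio A j"
        proof (intro exI conjI)
          show "(Max {t. (t, k) \<in> A}, k) \<in> A" using Max_in[OF fin ne] k Ssub by blast
          have "t \<le> Max {t. (t, j) \<in> A}" using Max_ge[OF fin] tj by blast
          also have "\<dots> \<le> Max {t. (t, k) \<in> A}" using that unfolding right_prio_def by simp
          finally show "t \<le> Max {t. (t, k) \<in> A}" .
        qed
        ultimately show "(\<exists>m\<in>set_tree \<tau>. m \<noteq> k \<and> min k j \<le> m \<and> m \<le> max k j) \<or> (\<exists>t'. (t',k) \<in> A \<and> t \<le> t')"
          by blast
      qed
    qed
  qed
qed

end
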